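(* Let $q\ge3$ be an integer and $f(x)=\log\left|\frac{\sin\pi qx}{\sin\pi x}\right|$. For all $t\in\left(\frac{3}{8q},\frac{5}{8q}\right)$ and all $0<s\le q^{-1}-t$, $$H(t,s):=A(s)+B(t,s)<0,$$ where $A(s)=\log\frac{\sin\pi s}{\sin\pi(q^{-1}+s)}$ and $B(t,s)=f(0)-f(t)-f'(t)\frac{q^{-1}-t-s}{q-1}$.
   Context: $f(0)=\log q$ (value of $f$ at $0$ by continuity). *)

theory Defs
  imports "HOL-Analysis.Analysis"
begin

text \<open>f(x) = log |sin(pi q x) / sin(pi x)|, extended by continuity at 0 with f(0) = log q.\<close>
definition fq :: "nat \<Rightarrow> real \<Rightarrow> real" where
  "fq q x = (if x = 0 then ln (real q) else ln \<bar>sin (pi * real q * x) / sin (pi * x)\<bar>)"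

definition A5 :: "nat \<Rightarrow> real \<Rightarrow> real" where
  "A5 q s = ln (sin (pi * s) / sin (pi * (1 / real q + s)))"

definition B5 :: "nat \<Rightarrow> real \<Rightarrow> real \<Rightarrow> real" where
  "B5 q t s = fq q 0 - fq q t - deriv (fq q) t * ((1 / real q - t - s) / (real q - 1))"

definition H5 :: "nat \<Rightarrow> real \<Rightarrow> real \<Rightarrow> real" where
  "H5 q t s = A5 q s + B5 q t s"

end

theory Submission
  imports Defs
begin

lemma sin_lb7:
  fixes x :: real assumes "0 \<le> x"
  shows "x - x^3/6 + x^5/120 - x^7/5040 \<le> sin x"
proof -
  have b: "\<bar>sin x - (\<Sum>m<7. sin_coeff m * x ^ m)\<bar> \<le> inverse (fact 7) * \<bar>x\<bar> ^ 7"
    by (rule Maclaurin_sin_bound)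
  have eS: "(\<Sum>m<7. sin_coeff m * x ^ m) = x - x^3/6 + x^5/120"
  proof -
    have "(\<Sum>m<7. sin_coeff m * x ^ m) = sin_coeff 0 * x^0 + sin_coeff 1 * x^1 + sin_coeff 2 * x^2
       + sin_coeff 3 * x^3 + sin_coeff 4 * x^4 + sin_coeff 5 * x^5 + sin_coeff 6 * x^6"
      by (simp add: lessThan_nat_numeral sum.insert)
    also have "\<dots> = x - x^3/6 + x^5/120"
      by (simp add: sin_coeff_def fact_numeral)
    finally show ?thesis .
  qed
  have eE: "inverse (fact 7) * \<bar>x\<bar> ^ 7 = x^7/5040"
  proof -
    have f: "fact 7 = (5040::real)" by (simp add: fact_numeral)
    have a: "\<bar>x\<bar>^7 = x^7" using assms by simp
    show ?thesis unfolding f a by (rule inverse_eq_divide[THEN arg_cong[where f="\<lambda>z. z * x^7"], THEN trans]) simp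
  qed
  from b have "\<bar>sin x - (x - x^3/6 + x^5/120)\<bar> \<le> x^7/5040" by (simp only: eS eE)
  then have "- (sin x - (x - x^3/6 + x^5/120)) \<le> x^7/5040" by (rule abs_le_D2)
  then show ?thesis by linarith
qed

lemma cos_lb2:
  fixes x :: real shows "1 - x^2/2 \<le> cos x"
proof -
  have "cos x = 1 - 2 * (sin (x/2))^2" using cos_double_sin[of "x/2"] by simp
  moreover have "(sin (x/2))^2 \<le> (x/2)^2"
    using abs_sin_x_le_abs_x[of "x/2"] by (metis abs_ge_zero power2_abs power_mono)
  ultimately show ?thesis by (simp add: power_divide)
qed

lemma ycos_le_sin:
  fixes y :: real assumes "0 < y" "y < pi/2"
  shows "y * cos y \<le> sin y"
proof -
  have "\<bar>y\<bar> \<le> \<bar>tan y\<bar>" using abs_tan_ge[of y] assms by simp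
  moreover have "cos y > 0" using assms by (intro cos_gt_zero) auto
  moreover have "tan y \<ge> 0" using assms by (intro tan_pos_pi2_le) auto
  ultimately have "y \<le> sin y / cos y" using assms by (simp add: tan_def)
  then show ?thesis using \<open>cos y > 0\<close> by (simp add: pos_le_divide_eq)
qed


lemma hmono:
  fixes z Z :: real assumes "0 \<le> z" "z \<le> Z" "Z \<le> 3"
  shows "1 - Z/6 + (1/120 - 3/5040) * Z^2 \<le> 1 - z/6 + (1/120 - 3/5040) * z^2"
proof -
  have e: "(1 - z/6 + (1/120 - 3/5040) * z^2) - (1 - Z/6 + (1/120 - 3/5040) * Z^2)
        = (Z - z) * (1/6 - (1/120 - 3/5040) * (z + Z))"
    by (simp add: power2_eq_square field_simps)
  have "0 \<le> (Z - z) * (1/6 - (1/120 - 3/5040) * (z + Z))"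
    using assms by (intro mult_nonneg_nonneg) auto
  then show ?thesis using e by linarith
qed

lemma sin_lb_h:
  fixes y :: real assumes "0 \<le> y" "y^2 \<le> 3"
  shows "y * (1 - y^2/6 + (1/120 - 3/5040) * (y^2)^2) \<le> sin y"
proof -
  have "y^7 \<le> y^5 * 3" 
  proof -
    have "y^7 = y^5 * y^2" by (simp add: power_add[symmetric])
    also have "\<dots> \<le> y^5 * 3" using assms by (intro mult_left_mono) auto
    finally show ?thesis .
  qed
  then have "y * (1 - y^2/6 + (1/120 - 3/5040) * (y^2)^2) \<le> y - y^3/6 + y^5/120 - y^7/5040"
    by (simp add: algebra_simps power2_eq_square power_mult_distrib eval_nat_numeral)
  also have "\<dots> \<le> sin y" using sin_lb7 assms by simp
  finally show ?thesis .
qed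

lemma key_prod:
  fixes Q \<tau> :: real
  assumes Q: "3 \<le> Q" and t1: "3/8 < \<tau>" and t2: "\<tau> < 5/8"
  shows "Q * sin (\<tau> * (pi/Q)) * sin ((1-\<tau>) * (pi/Q)) < sin (pi*\<tau>) * sin ((2-\<tau>) * (pi/Q))"
proof -
  define x where "x = pi/Q"
  have pil: "3.1415 \<le> pi" and piu: "pi \<le> 3.1416" using pi_approx by auto
  have x0: "0 < x" using Q by (simp add: x_def)
  have x1: "x \<le> 1.04720"
  proof -
    have "x \<le> pi/3" unfolding x_def using Q pi_gt_zero by (intro divide_left_mono) auto
    then show ?thesis using piu by simp
  qed
  have Qx: "Q * x = pi" using Q by (simp add: x_def)
  have s1: "sin (\<tau>*x) \<le> \<tau>*x" using t1 x0 by (intro sin_x_le_x) simp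
  have s2: "sin ((1-\<tau>)*x) \<le> (1-\<tau>)*x" using t2 x0 by (intro sin_x_le_x) simp
  have xpi: "x \<le> pi" using x1 pil by simp
  have a1: "\<tau>*x \<le> x" using mult_right_mono[of \<tau> 1 x] t2 x0 by simp
  have s1p: "0 \<le> sin (\<tau>*x)"
    by (rule sin_ge_zero) (use t1 x0 in simp, use xpi a1 in linarith)
  have a2: "(1-\<tau>)*x \<le> x" using mult_right_mono[of "1-\<tau>" 1 x] t1 x0 by simp
  have s2p: "0 \<le> sin ((1-\<tau>)*x)"
    by (rule sin_ge_zero) (use t2 x0 in simp, use xpi a2 in linarith)
  have "Q * sin (\<tau>*x) * sin ((1-\<tau>)*x) \<le> Q * (\<tau>*x) * ((1-\<tau>)*x)"
    using Q s1 s2 s1p s2p by (intro mult_mono) auto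
  also have "\<dots> = (Q*x) * (\<tau>*(1-\<tau>)) * x" by (simp add: algebra_simps)
  also have "\<dots> = pi * (\<tau>*(1-\<tau>)) * x" using Qx by simp
  also have "\<dots> \<le> 3.1416 * (1/4) * x"
  proof -
    have "\<tau>*(1-\<tau>) \<le> 1/4" using zero_le_power2[of "\<tau> - 1/2"] by (simp add: algebra_simps power2_eq_square)
    moreover have "0 \<le> \<tau>*(1-\<tau>)" using t1 t2 by simp
    ultimately show ?thesis using piu x0 by (intro mult_right_mono mult_mono) auto
  qed
  finally have L: "Q * sin (\<tau>*x) * sin ((1-\<tau>)*x) \<le> 0.7854 * x" by simp
  have S: "0.9228 \<le> sin (pi*\<tau>)"
  proof -
    have "sin (pi*\<tau>) = cos (pi*\<tau> - pi/2)" by (simp add: cos_diff)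
    moreover have "1 - (pi*\<tau> - pi/2)^2/2 \<le> cos (pi*\<tau> - pi/2)" by (rule cos_lb2)
    moreover have "(pi*\<tau> - pi/2)^2 \<le> (3.1416/8)^2"
    proof -
      have ab: "\<bar>\<tau> - 1/2\<bar> \<le> 1/8" using t1 t2 by (auto simp: abs_if)
      have "pi*\<tau> - pi/2 = pi*(\<tau>-1/2)" by (simp add: algebra_simps)
      then have "\<bar>pi*\<tau> - pi/2\<bar> = pi * \<bar>\<tau> - 1/2\<bar>" by (simp add: abs_mult)
      also have "\<dots> \<le> 3.1416 * (1/8)" using ab piu by (intro mult_mono) auto
      finally show ?thesis by (metis abs_ge_zero power2_abs power_mono times_divide_eq_right mult_1_right)
    qed
    moreover have "(3.1416/8::real)^2 = 0.15421329" by (simp add: power2_eq_square)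
    ultimately have "sin (pi*\<tau>) \<ge> 1 - 0.15421329/2" by (simp add: divide_right_mono)
    then show ?thesis by simp
  qed
  define y where "y = (2-\<tau>)*x"
  have y0: "0 \<le> y" using t2 x0 by (simp add: y_def)
  have yh: "y * (1 - y^2/6 + (1/120 - 3/5040) * (y^2)^2) \<le> sin y"
  proof (rule sin_lb_h[OF y0])
    have "y \<le> (13/8) * 1.04720" unfolding y_def using t1 t2 x0 x1 by (intro mult_mono) auto
    then have "y^2 \<le> ((13/8) * 1.04720)^2" using y0 by (intro power_mono) auto
    moreover have "((13/8) * 1.04720::real)^2 \<le> 3" by (simp add: power2_eq_square)
    ultimately show "y^2 \<le> 3" by linarith
  qed
  have R: "0.7854 * x < sin (pi*\<tau>) * sin y"
  proof (cases "\<tau> \<le> 1/2")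
    case True
    have ylo: "1.5 * x \<le> y" unfolding y_def using True x0 by (intro mult_right_mono) auto
    have "y \<le> (13/8) * 1.04720" unfolding y_def using t1 t2 x0 x1 by (intro mult_mono) auto
    then have "y^2 \<le> ((13/8) * 1.04720)^2" using y0 power_mono[of y "(13/8) * 1.04720" 2] by simp
    moreover have "((13/8) * 1.04720::real)^2 \<le> 2.8960" by (simp add: power2_eq_square)
    ultimately have z: "y^2 \<le> 2.8960" by linarith
    have hm: "1 - 2.8960/6 + (1/120 - 3/5040) * 2.8960^2 \<le> 1 - y^2/6 + (1/120 - 3/5040) * (y^2)^2"
      by (rule hmono) (use z in auto)
    have "(0.58::real) \<le> 1 - 2.8960/6 + (1/120 - 3/5040) * 2.8960^2" by (simp add: power2_eq_square)
    with hm have h: "0.58 \<le> 1 - y^2/6 + (1/120 - 3/5040) * (y^2)^2" by linarith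
    have "0.7854 * x < 0.9228 * ((1.5 * x) * 0.58)" using x0 by simp
    also have "\<dots> \<le> sin (pi*\<tau>) * (y * (1 - y^2/6 + (1/120 - 3/5040) * (y^2)^2))"
      using S ylo h x0 by (intro mult_mono) auto
    also have "\<dots> \<le> sin (pi*\<tau>) * sin y" using S yh by (intro mult_left_mono) auto
    finally show ?thesis .
  next
    case False
    have ylo: "1.375 * x \<le> y" unfolding y_def using t2 x0 by (intro mult_right_mono) auto
    have "y \<le> 1.5 * 1.04720" unfolding y_def using False x0 x1 by (intro mult_mono) auto
    then have "y^2 \<le> (1.5 * 1.04720)^2" using y0 power_mono[of y "1.5 * 1.04720" 2] by simp
    moreover have "(1.5 * 1.04720::real)^2 \<le> 2.4675" by (simp add: power2_eq_square)
    ultimately have z: "y^2 \<le> 2.4675" by linarith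
    have hm: "1 - 2.4675/6 + (1/120 - 3/5040) * 2.4675^2 \<le> 1 - y^2/6 + (1/120 - 3/5040) * (y^2)^2"
      by (rule hmono) (use z in auto)
    have "(0.635::real) \<le> 1 - 2.4675/6 + (1/120 - 3/5040) * 2.4675^2" by (simp add: power2_eq_square)
    with hm have h: "0.635 \<le> 1 - y^2/6 + (1/120 - 3/5040) * (y^2)^2" by linarith
    have "0.7854 * x < 0.9228 * ((1.375 * x) * 0.635)" using x0 by simp
    also have "\<dots> \<le> sin (pi*\<tau>) * (y * (1 - y^2/6 + (1/120 - 3/5040) * (y^2)^2))"
      using S ylo h x0 by (intro mult_mono) auto
    also have "\<dots> \<le> sin (pi*\<tau>) * sin y" using S yh by (intro mult_left_mono) auto
    finally show ?thesis .
  qed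
  show ?thesis using L R unfolding x_def y_def by linarith
qed


lemma sin_pi_tau_lb:
  fixes \<tau> :: real assumes t1: "3/8 < \<tau>" and t2: "\<tau> < 5/8"
  shows "0.9228 \<le> sin (pi*\<tau>)"
proof -
  have piu: "pi \<le> 3.1416" using pi_approx by auto
  have "sin (pi*\<tau>) = cos (pi*\<tau> - pi/2)" by (simp add: cos_diff)
  moreover have "1 - (pi*\<tau> - pi/2)^2/2 \<le> cos (pi*\<tau> - pi/2)" by (rule cos_lb2)
  moreover have "(pi*\<tau> - pi/2)^2 \<le> (3.1416/8)^2"
  proof -
    have ab: "\<bar>\<tau> - 1/2\<bar> \<le> 1/8" using t1 t2 by (auto simp: abs_if)
    have "pi*\<tau> - pi/2 = pi*(\<tau>-1/2)" by (simp add: algebra_simps)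
    then have "\<bar>pi*\<tau> - pi/2\<bar> = pi * \<bar>\<tau> - 1/2\<bar>" by (simp add: abs_mult)
    also have "\<dots> \<le> 3.1416 * (1/8)" using ab piu by (intro mult_mono) auto
    finally show ?thesis by (metis abs_ge_zero power2_abs power_mono times_divide_eq_right mult_1_right)
  qed
  moreover have "(3.1416/8::real)^2 = 0.15421329" by (simp add: power2_eq_square)
  ultimately have "sin (pi*\<tau>) \<ge> 1 - 0.15421329/2" by (simp add: divide_right_mono)
  then show ?thesis by simp
qed

lemma deriv_fq:
  fixes q :: nat and t :: real
  assumes q: "q \<ge> 3" and t0: "0 < t" and t1: "t < 1 / real q"
  shows "deriv (fq q) t = pi * real q * cos (pi * real q * t) / sin (pi * real q * t)
                          - pi * cos (pi * t) / sin (pi * t)"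
proof -
  define Q where "Q = real q"
  have Q3: "Q \<ge> 3" using q by (simp add: Q_def)
  define S where "S = {0<..<1/Q}"
  have pos: "sin (pi * Q * x) > 0 \<and> sin (pi * x) > 0" if "x \<in> S" for x
  proof -
    from that have x0: "0 < x" and x1: "x < 1/Q" by (auto simp: S_def)
    have "Q * x < 1" using x1 Q3 by (simp add: field_simps)
    then have "pi * Q * x < pi * 1" by (metis mult.assoc mult_strict_left_mono pi_gt_zero)
    moreover have "1/Q < 1" using Q3 by simp
    then have "x < 1" using x1 by linarith
    ultimately show ?thesis using x0 Q3 by (auto intro!: sin_gt_zero)
  qed
  have tS: "t \<in> S" using t0 t1 by (simp add: S_def Q_def)
  have eq: "(\<lambda>x. ln (sin (pi * Q * x)) - ln (sin (pi * x))) x = fq q x" if "x \<in> S" for x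
  proof -
    have "x \<noteq> 0" using that by (auto simp: S_def)
    then show ?thesis using pos[OF that] by (simp add: fq_def Q_def ln_div)
  qed
  have "((\<lambda>x. ln (sin (pi * Q * x)) - ln (sin (pi * x))) has_field_derivative
        (pi * Q * cos (pi * Q * t) / sin (pi * Q * t) - pi * cos (pi * t) / sin (pi * t))) (at t)"
    using pos[OF tS]
    by (auto intro!: derivative_eq_intros simp: field_simps)
  then have "(fq q has_field_derivative
        (pi * Q * cos (pi * Q * t) / sin (pi * Q * t) - pi * cos (pi * t) / sin (pi * t))) (at t)"
    by (rule has_field_derivative_transform_within_open[where S=S]) (use tS eq in \<open>auto simp: S_def\<close>)
  then show ?thesis unfolding Q_def by (rule DERIV_imp_deriv)
qed

lemma psi_deriv:
  fixes Q K x :: real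
  assumes sa: "0 < sin (pi * x)" and sb: "0 < sin (pi * (1/Q + x))"
  shows "((\<lambda>x. ln (sin (pi * x)) - ln (sin (pi * (1/Q + x))) - K * x) has_real_derivative
      (pi * cos (pi * x) / sin (pi * x) - pi * cos (pi * (1/Q + x)) / sin (pi * (1/Q + x)) - K)) (at x)"
proof -
  have i1: "((\<lambda>z. pi * z) has_real_derivative pi) (at x)" by (rule DERIV_cmult_Id)
  have i2: "((\<lambda>z. pi * (1/Q + z)) has_real_derivative pi * (0 + 1)) (at x)"
    by (intro DERIV_cmult DERIV_add DERIV_const DERIV_ident)
  have l1: "((\<lambda>z. ln (sin (pi * z))) has_real_derivative 1 / sin (pi * x) * (cos (pi * x) * pi)) (at x)"
    by (rule DERIV_chain2[OF DERIV_ln_divide[OF sa] DERIV_fun_sin[OF i1]])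
  have l2: "((\<lambda>z. ln (sin (pi * (1/Q + z)))) has_real_derivative 1 / sin (pi * (1/Q + x)) * (cos (pi * (1/Q + x)) * (pi * (0 + 1)))) (at x)"
    by (rule DERIV_chain2[OF DERIV_ln_divide[OF sb] DERIV_fun_sin[OF i2]])
  have l3: "((\<lambda>z. K * z) has_real_derivative K) (at x)" by (rule DERIV_cmult_Id)
  have "((\<lambda>x. ln (sin (pi * x)) - ln (sin (pi * (1/Q + x))) - K * x) has_real_derivative
      (1 / sin (pi * x) * (cos (pi * x) * pi) - 1 / sin (pi * (1/Q + x)) * (cos (pi * (1/Q + x)) * (pi * (0 + 1))) - K)) (at x)"
    by (intro DERIV_diff l1 l2 l3)
  moreover have "1 / sin (pi * x) * (cos (pi * x) * pi) - 1 / sin (pi * (1/Q + x)) * (cos (pi * (1/Q + x)) * (pi * (0 + 1))) - K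
      = pi * cos (pi * x) / sin (pi * x) - pi * cos (pi * (1/Q + x)) / sin (pi * (1/Q + x)) - K"
    by (simp add: mult.commute)
  ultimately show ?thesis by simp
qed


theorem lemma5p8:
  fixes q :: nat and t s :: real
  assumes "q \<ge> 3"
    and "3 / (8 * real q) < t" and "t < 5 / (8 * real q)"
    and "0 < s" and "s \<le> 1 / real q - t"
  shows "H5 q t s < 0"
proof -
  define Q where "Q = real q"
  have Q3: "Q \<ge> 3" using assms(1) by (simp add: Q_def)
  have pil: "3.1415 \<le> pi" and piu: "pi \<le> 3.1416" using pi_approx by auto
  define \<tau> where "\<tau> = Q * t"
  have tau1: "3/8 < \<tau>" using assms(2) Q3 by (simp add: \<tau>_def Q_def field_simps)
  have tau2: "\<tau> < 5/8" using assms(3) Q3 by (simp add: \<tau>_def Q_def field_simps)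
  have t_eq: "t = \<tau> / Q" using Q3 by (simp add: \<tau>_def)
  have t0: "0 < t" using tau1 Q3 t_eq by simp
  define s1 where "s1 = 1/Q - t"
  have s1_eq: "s1 = (1 - \<tau>)/Q" using Q3 by (simp add: s1_def t_eq field_simps)
  have s1pos: "0 < s1" using tau2 Q3 s1_eq by simp
  have ss1: "s \<le> s1" using assms(5) by (simp add: s1_def Q_def)
  have tQ: "t < 1/Q" using s1pos s1_def by simp
  define D where "D = pi * Q * cos (pi * Q * t) / sin (pi * Q * t) - pi * cos (pi * t) / sin (pi * t)"
  have dD: "deriv (fq q) t = D" unfolding D_def Q_def
    using deriv_fq[OF assms(1) t0] tQ by (simp add: Q_def)
  define K where "K = - D / (Q - 1)"
  define L where "L = sin (pi/Q) / s1"
  have piQ: "pi * Q * t = pi * \<tau>" by (simp add: \<tau>_def)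
  have sinpt: "0 < sin (pi * t)"
  proof -
    have "1/Q < 1" using Q3 by simp
    then have "t < 1" using tQ by linarith
    then have "pi * t < pi * 1" by (intro mult_strict_left_mono) auto
    moreover have "0 < pi * t" using t0 by simp
    ultimately show ?thesis by (intro sin_gt_zero) auto
  qed
  have Stau: "0.9228 \<le> sin (pi * \<tau>)" by (rule sin_pi_tau_lb[OF tau1 tau2])
  have b1: "pi * cos (pi * t) / sin (pi * t) \<le> Q / \<tau>"
  proof -
    have "pi * t < pi / 2"
    proof -
      have "1/Q < 1/2" using Q3 by simp
      then have "t < 1/2" using tQ by linarith
      then show ?thesis by simp
    qed
    then have "(pi*t) * cos (pi*t) \<le> sin (pi*t)" using t0 by (intro ycos_le_sin) auto
    then have "pi * cos (pi * t) \<le> sin (pi * t) / t" using t0 by (simp add: field_simps)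
    then have "pi * cos (pi * t) / sin (pi * t) \<le> 1 / t" using sinpt t0 by (simp add: field_simps)
    then show ?thesis using t_eq tau1 Q3 by simp
  qed
  define M where "M = 1/\<tau> + (if \<tau> \<le> 1/2 then 0 else 1.35)"
  have b2: "- (pi * Q * cos (pi * \<tau>) / sin (pi * \<tau>)) \<le> Q * (if \<tau> \<le> 1/2 then 0 else 1.35)"
  proof (cases "\<tau> \<le> 1/2")
    case True
    have p0: "0 \<le> pi * \<tau>" using tau1 by simp
    have p1: "pi * \<tau> \<le> pi * (1/2)" using True by (intro mult_left_mono) auto
    have "cos (pi * \<tau>) \<ge> 0" by (rule cos_ge_zero; use p0 p1 pi_gt_zero in linarith)
    then show ?thesis using Stau Q3 True by simp
  next
    case False
    have ce: "- cos (pi * \<tau>) = sin (pi * \<tau> - pi/2)" by (simp add: sin_diff)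
    have "pi * (1/2) \<le> pi * \<tau>" using False by (intro mult_left_mono) auto
    moreover have "pi * \<tau> \<le> pi * 1" using tau2 by (intro mult_left_mono) auto
    ultimately have "0 \<le> sin (pi * \<tau> - pi/2)" using pi_gt_zero by (intro sin_ge_zero) linarith+
    with ce have nc: "0 \<le> - cos (pi * \<tau>)" by simp
    note ce
    also have "sin (pi * \<tau> - pi/2) \<le> pi * \<tau> - pi/2" using False by (intro sin_x_le_x) (simp add: algebra_simps)
    also have "\<dots> = pi * (\<tau> - 1/2)" by (simp add: algebra_simps)
    also have "\<dots> \<le> 3.1416 * (1/8)" using False tau2 piu by (intro mult_mono) auto
    finally have c: "- cos (pi * \<tau>) \<le> 3.1416/8" by simp
    have "- (pi * Q * cos (pi * \<tau>) / sin (pi * \<tau>)) = pi * Q * (- cos (pi * \<tau>)) / sin (pi * \<tau>)" by simp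
    also have "\<dots> \<le> 3.1416 * Q * (3.1416/8) / 0.9228"
      using c nc Stau Q3 piu by (intro frac_le mult_mono) auto
    also have "\<dots> \<le> Q * 1.35" using Q3 by simp
    finally show ?thesis using False by simp
  qed
  have mD: "- D \<le> Q * M" using b1 b2 unfolding D_def M_def piQ by (simp add: algebra_simps)
  have M0: "0 \<le> M" using tau1 by (simp add: M_def)
  have sQ: "2.5672 / Q \<le> sin (pi/Q)"
  proof -
    define y where "y = pi/Q"
    have y0: "0 < y" using Q3 by (simp add: y_def)
    have y1: "y \<le> 1.04720"
    proof -
      have "y \<le> pi/3" unfolding y_def using Q3 pi_gt_zero by (intro divide_left_mono) auto
      then show ?thesis using piu by simp
    qed
    have yy: "y^2 \<le> 1.04720^2" using y0 y1 by (intro power_mono) auto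
    have "y^2 \<le> 3" using yy by (simp add: power2_eq_square)
    then have "y * (1 - y^2/6 + (1/120 - 3/5040) * (y^2)^2) \<le> sin y" using sin_lb_h y0 by simp
    moreover have "y * (1 - y^2/6) \<le> y * (1 - y^2/6 + (1/120 - 3/5040) * (y^2)^2)"
      using y0 by (intro mult_left_mono) auto
    moreover have "0.8172 \<le> 1 - y^2/6" using yy by (simp add: power2_eq_square)
    moreover have "2.5672 / Q \<le> y * 0.8172" unfolding y_def using pil Q3 by (simp add: field_simps)
    moreover have "y * 0.8172 \<le> y * (1 - y^2/6)" using y0 calculation(3) by (intro mult_left_mono) auto
    ultimately show ?thesis unfolding y_def by linarith
  qed
  have KL: "K \<le> L"
  proof -
    have "1.5 * M * (1 - \<tau>) \<le> 2.5672"
    proof (cases "\<tau> \<le> 1/2")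
      case True
      then have "M = 1/\<tau>" by (simp add: M_def)
      moreover have "1.5 * (1-\<tau>) / \<tau> \<le> 2.5672" using tau1 by (simp add: divide_le_eq)
      ultimately show ?thesis by simp
    next
      case False
      then have "M = 1/\<tau> + 1.35" by (simp add: M_def)
      moreover have "1/\<tau> \<le> 2" using False by (simp add: field_simps)
      ultimately have "M \<le> 3.35" by simp
      then have "1.5 * M * (1 - \<tau>) \<le> 1.5 * 3.35 * (1/2)" using False M0 tau2 by (intro mult_mono) auto
      then show ?thesis by simp
    qed
    then have "1.5 * M \<le> 2.5672 / (1 - \<tau>)" using tau2 by (simp add: field_simps)
    also have "\<dots> \<le> sin (pi/Q) * Q / (1 - \<tau>)"
      using sQ Q3 tau2 by (intro divide_right_mono) (auto simp: field_simps)
    also have "\<dots> = L" unfolding L_def s1_eq using Q3 by simp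
    finally have a: "1.5 * M \<le> L" .
    have "Q \<le> 1.5 * (Q - 1)" using Q3 by simp
    then have "Q * M \<le> 1.5 * (Q - 1) * M" using M0 by (intro mult_right_mono) auto
    then have "- D \<le> (Q - 1) * (1.5 * M)" using mD by (simp add: algebra_simps)
    also have "\<dots> \<le> (Q - 1) * L" using a Q3 by (intro mult_left_mono) auto
    finally show ?thesis unfolding K_def using Q3 by (simp add: field_simps)
  qed
  have s1lt: "1/Q + s1 < 1"
  proof -
    have "1/Q + s1 = (2 - \<tau>)/Q" using Q3 by (simp add: s1_eq field_simps)
    also have "\<dots> < 1" using tau1 Q3 by (simp add: field_simps)
    finally show ?thesis .
  qed
  have Qi: "0 < 1/Q" using Q3 by simp
  have pos1: "0 < sin (pi * x)" if "0 < x" "x \<le> s1" for x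
  proof -
    have "x < 1" using that s1lt Qi by linarith
    then have "pi * x < pi * 1" by (intro mult_strict_left_mono) auto
    moreover have "0 < pi * x" using that by simp
    ultimately show ?thesis by (intro sin_gt_zero) auto
  qed
  have pos2: "0 < sin (pi * (1/Q + x))" if "0 < x" "x \<le> s1" for x
  proof -
    have "1/Q + x < 1" using that s1lt by simp
    then have "pi * (1/Q + x) < pi * 1" by (intro mult_strict_left_mono) auto
    moreover have "0 < 1/Q + x" using that Qi by linarith
    then have "0 < pi * (1/Q + x)" by simp
    ultimately show ?thesis by (intro sin_gt_zero) auto
  qed
  define \<psi> where "\<psi> = (\<lambda>x. ln (sin (pi * x)) - ln (sin (pi * (1/Q + x))) - K * x)"
  have mono: "\<psi> s \<le> \<psi> s1"
  proof (rule DERIV_nonneg_imp_nondecreasing[OF ss1])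
    fix x assume x1: "s \<le> x" and x2: "x \<le> s1"
    have x0: "0 < x" using x1 assms(4) by simp
    have sa: "0 < sin (pi * x)" using pos1[OF x0 x2] .
    have sb: "0 < sin (pi * (1/Q + x))" using pos2[OF x0 x2] .
    have "(\<psi> has_real_derivative
      (pi * cos (pi * x) / sin (pi * x) - pi * cos (pi * (1/Q + x)) / sin (pi * (1/Q + x)) - K)) (at x)"
      unfolding \<psi>_def by (rule psi_deriv[OF sa sb])
    moreover have "0 \<le> pi * cos (pi * x) / sin (pi * x) - pi * cos (pi * (1/Q + x)) / sin (pi * (1/Q + x)) - K"
    proof -
      define a where "a = pi * x"
      define b where "b = pi * (1/Q + x)"
      have ba: "b - a = pi / Q" by (simp add: a_def b_def algebra_simps)
      have "pi * cos a / sin a - pi * cos b / sin b = pi * (sin b * cos a - cos b * sin a) / (sin a * sin b)"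
        using sa sb unfolding a_def b_def by (simp add: field_simps)
      also have "sin b * cos a - cos b * sin a = sin (pi/Q)" using ba sin_diff[of b a] by simp
      finally have e: "pi * cos a / sin a - pi * cos b / sin b = pi * sin (pi/Q) / (sin a * sin b)" .
      have "0 < 2.5672 / Q" using Q3 by simp
      then have sQ0: "0 \<le> sin (pi/Q)" using sQ by linarith
      have "sin a * sin b \<le> sin a * 1" using sa unfolding a_def by (intro mult_left_mono) auto
      also have "\<dots> \<le> pi * s1"
      proof -
        have "sin a \<le> a" using x0 unfolding a_def by (intro sin_x_le_x) simp
        moreover have "pi * x \<le> pi * s1" using x2 by (intro mult_left_mono) auto
        ultimately show ?thesis unfolding a_def by linarith
      qed
      finally have ab: "sin a * sin b \<le> pi * s1" .
      have abp: "0 < sin a * sin b" using sa sb unfolding a_def b_def by simp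
      have "L = pi * sin (pi/Q) / (pi * s1)" unfolding L_def by simp
      also have "\<dots> \<le> pi * sin (pi/Q) / (sin a * sin b)"
        using ab abp sQ0 by (intro divide_left_mono) auto
      finally have "L \<le> pi * cos a / sin a - pi * cos b / sin b" using e by simp
      then show ?thesis using KL unfolding a_def b_def by simp
    qed
    ultimately show "\<exists>y. (\<psi> has_real_derivative y) (at x) \<and> 0 \<le> y" by blast
  qed
  have sa1: "0 < sin (pi * s1)" using pos1[OF s1pos] by simp
  have sb1: "0 < sin (pi * (1/Q + s1))" using pos2[OF s1pos] by simp
  have sas: "0 < sin (pi * s)" using pos1[OF assms(4) ss1] .
  have sbs: "0 < sin (pi * (1/Q + s))" using pos2[OF assms(4) ss1] .
  have sQt: "0 < sin (pi * Q * t)" unfolding piQ by (rule less_le_trans[OF _ Stau]) simp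
  have A_s: "A5 q s = ln (sin (pi * s)) - ln (sin (pi * (1/Q + s)))"
    unfolding A5_def Q_def[symmetric] using sas sbs by (simp add: ln_div)
  have A_s1: "A5 q s1 = ln (sin (pi * s1)) - ln (sin (pi * (1/Q + s1)))"
    unfolding A5_def Q_def[symmetric] using sa1 sb1 by (simp add: ln_div)
  have f0: "fq q 0 = ln Q" by (simp add: fq_def Q_def)
  have ft: "fq q t = ln (sin (pi * Q * t)) - ln (sin (pi * t))"
    using t0 sQt sinpt by (simp add: fq_def Q_def[symmetric] ln_div)
  have Bterm: "- (D * ((1/Q - t - s) / (Q - 1))) = K * (s1 - s)"
  proof -
    have "s1 - s = 1/Q - t - s" by (simp add: s1_def)
    then show ?thesis unfolding K_def by (simp add: divide_inverse)
  qed
  have H0: "H5 q t s = A5 q s + (fq q 0 - fq q t - deriv (fq q) t * ((1/Q - t - s) / (Q - 1)))"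
    unfolding H5_def B5_def Q_def ..
  have H: "H5 q t s = A5 q s + K * (s1 - s) + ln Q - ln (sin (pi * Q * t)) + ln (sin (pi * t))"
    using H0 Bterm unfolding dD f0 ft by linarith
  have m2: "ln (sin (pi * s)) - ln (sin (pi * (1/Q + s))) - K * s \<le> ln (sin (pi * s1)) - ln (sin (pi * (1/Q + s1))) - K * s1"
    using mono unfolding \<psi>_def .
  have "K * (s1 - s) = K * s1 - K * s" by (rule right_diff_distrib)
  then have "A5 q s + K * (s1 - s) \<le> A5 q s1" using m2 unfolding A_s A_s1 by linarith
  then have H1: "H5 q t s \<le> ln (sin (pi * s1)) - ln (sin (pi * (1/Q + s1))) + ln Q - ln (sin (pi * Q * t)) + ln (sin (pi * t))"
    using H A_s1 by linarith
  have kp: "Q * sin (\<tau> * (pi/Q)) * sin ((1-\<tau>) * (pi/Q)) < sin (pi*\<tau>) * sin ((2-\<tau>) * (pi/Q))"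
    by (rule key_prod[OF Q3 tau1 tau2])
  have e1: "\<tau> * (pi/Q) = pi * t" using t_eq by simp
  have e2: "(1-\<tau>) * (pi/Q) = pi * s1" using s1_eq by simp
  have e3: "(2-\<tau>) * (pi/Q) = pi * (1/Q + s1)"
  proof -
    have "1/Q + s1 = (1 + (1 - \<tau>))/Q" unfolding s1_eq add_divide_distrib[symmetric] by simp
    then show ?thesis by simp
  qed
  have kp2: "Q * sin (pi * t) * sin (pi * s1) < sin (pi * Q * t) * sin (pi * (1/Q + s1))"
    using kp unfolding e1 e2 e3 piQ .
  have "ln (Q * sin (pi * t) * sin (pi * s1)) < ln (sin (pi * Q * t) * sin (pi * (1/Q + s1)))"
    using kp2 Q3 sinpt sa1 sQt sb1 by (intro ln_less_cancel_iff[THEN iffD2]) auto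
  then have "ln Q + ln (sin (pi * t)) + ln (sin (pi * s1)) < ln (sin (pi * Q * t)) + ln (sin (pi * (1/Q + s1)))"
    using Q3 sinpt sa1 sQt sb1 by (simp add: ln_mult)
  then show ?thesis using H1 by linarith
qed

end
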